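(* Let $\mathcal{X}$ and $\mathcal{Y}$ be infinite-dimensional Banach spaces with Schauder bases $\{x_n\}_{n\ge1}$ and $\{y_n\}_{n\ge1}$, let $f:\mathcal{X}\to\mathcal{Y}$ be a (non-linear) Hölder continuous operator, and let $\mathcal{F}$ be a universal approximator. For every $\varepsilon>0$ and every compact $K\subseteq\mathcal{X}$ there exist $n,N,q\in\mathbb{N}_+$, $\hat f\in\bigcup_c\mathcal{F}_{n,N,c}$ and vectors $z^{(1)},\dots,z^{(N)}\in\mathbb{R}^q$ such that the operator $$\hat t(x)=\sum_{j=1}^N\sum_{i=1}^q\Big[P_{\Delta_N}\circ\hat f\big((\beta^x_k)_{k=1}^n\big)\Big]_j\,z^{(j)}_i\,y_i$$ satisfies $\sup_{x\in K}\|\hat t(x)-f(x)\|_{\mathcal{Y}}<\varepsilon$, where $x=\sum_{k\ge1}\beta^x_kx_k$ is the Schauder expansion of $x$.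
   Context: $P_{\Delta_N}$ is the Euclidean orthogonal projection of $\mathbb{R}^N$ onto the simplex $\Delta_N=\{w\in[0,1]^N:\sum w_i=1\}$. A universal approximator is a family $\mathcal{F}=\{\mathcal{F}_{n,m,c}\}$ of sets of maps $\mathbb{R}^n\to\mathbb{R}^m$, nested in $c$, with a rate function $r(\omega,K,n,m,c)$ decreasing to $0$ in $c$, such that every uniformly continuous $f:\mathbb{R}^n\to\mathbb{R}^m$ with continuous modulus $\omega$ is approximated on every compact $K$ within $r(\omega,K,n,m,c)$ by some element of $\mathcal{F}_{n,m,c}$. *)

theory Defs
  imports "HOL-Analysis.Analysis"
begin

text \<open>Euclidean space R^n, represented by functions nat => real vanishing from index n on
  (coordinate k of R^n, k = 1..n, is stored at index k - 1).\<close>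
definition euclid :: "nat \<Rightarrow> (nat \<Rightarrow> real) set" where
  "euclid n = {v. \<forall>i\<ge>n. v i = 0}"

definition enorm :: "nat \<Rightarrow> (nat \<Rightarrow> real) \<Rightarrow> real" where
  "enorm n v = sqrt (\<Sum>i<n. (v i)\<^sup>2)"

definition prob_simplex :: "nat \<Rightarrow> (nat \<Rightarrow> real) set" where
  "prob_simplex N = {w \<in> euclid N. (\<forall>i<N. 0 \<le> w i \<and> w i \<le> 1) \<and> (\<Sum>i<N. w i) = 1}"

definition proj_simplex :: "nat \<Rightarrow> (nat \<Rightarrow> real) \<Rightarrow> (nat \<Rightarrow> real)" where
  "proj_simplex N u = (THE w. w \<in> prob_simplex N \<and>
      (\<forall>v\<in>prob_simplex N. enorm N (u - w) \<le> enorm N (u - v)))"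

definition modulus :: "(real \<Rightarrow> real) \<Rightarrow> bool" where
  "modulus \<omega> \<longleftrightarrow> continuous_on {0..} \<omega> \<and> \<omega> 0 = 0 \<and> mono_on {0..} \<omega> \<and> (\<forall>t\<ge>0. 0 \<le> \<omega> t)"

definition unif_cont_mod ::
  "(real \<Rightarrow> real) \<Rightarrow> nat \<Rightarrow> nat \<Rightarrow> ((nat \<Rightarrow> real) \<Rightarrow> (nat \<Rightarrow> real)) \<Rightarrow> bool" where
  "unif_cont_mod \<omega> n m f \<longleftrightarrow> (\<forall>v\<in>euclid n. f v \<in> euclid m) \<and>
     (\<forall>u\<in>euclid n. \<forall>v\<in>euclid n. enorm m (f u - f v) \<le> \<omega> (enorm n (u - v)))"

definition universal_approximator ::
  "(nat \<Rightarrow> nat \<Rightarrow> nat \<Rightarrow> ((nat \<Rightarrow> real) \<Rightarrow> (nat \<Rightarrow> real)) set) \<Rightarrow> bool" where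
  "universal_approximator F \<longleftrightarrow>
    (\<forall>n m c. \<forall>g\<in>F n m c. \<forall>v\<in>euclid n. g v \<in> euclid m) \<and>
    (\<forall>n m c c'. c \<le> c' \<longrightarrow> F n m c \<subseteq> F n m c') \<and>
    (\<exists>r :: (real \<Rightarrow> real) \<Rightarrow> (nat \<Rightarrow> real) set \<Rightarrow> nat \<Rightarrow> nat \<Rightarrow> nat \<Rightarrow> real.
       (\<forall>\<omega> K n m. antimono (r \<omega> K n m) \<and> (r \<omega> K n m \<longlonglongrightarrow> 0)) \<and>
       (\<forall>\<omega> n m f K c. modulus \<omega> \<longrightarrow> unif_cont_mod \<omega> n m f \<longrightarrow>
          compact K \<longrightarrow> K \<subseteq> euclid n \<longrightarrow>
          (\<exists>g\<in>F n m c. \<forall>v\<in>K. enorm m (f v - g v) \<le> r \<omega> K n m c)))"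

text \<open>Schauder basis (indexed from 0): every x has a unique norm-convergent expansion.\<close>
definition schauder_basis :: "(nat \<Rightarrow> 'a::real_normed_vector) \<Rightarrow> bool" where
  "schauder_basis b \<longleftrightarrow> (\<forall>x. \<exists>!\<beta>. (\<lambda>n. \<Sum>k<n. \<beta> k *\<^sub>R b k) \<longlonglongrightarrow> x)"

definition schauder_coeff :: "(nat \<Rightarrow> 'a::real_normed_vector) \<Rightarrow> 'a \<Rightarrow> nat \<Rightarrow> real" where
  "schauder_coeff b x = (THE \<beta>. (\<lambda>n. \<Sum>k<n. \<beta> k *\<^sub>R b k) \<longlonglongrightarrow> x)"

definition infinite_dimensional :: "'a::real_vector itself \<Rightarrow> bool" where
  "infinite_dimensional _ \<longleftrightarrow> \<not> (\<exists>S::'a set. finite S \<and> span S = UNIV)"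

definition holder_continuous :: "('a::real_normed_vector \<Rightarrow> 'b::real_normed_vector) \<Rightarrow> bool" where
  "holder_continuous f \<longleftrightarrow> (\<exists>C \<alpha>. 0 \<le> C \<and> 0 < \<alpha> \<and> \<alpha> \<le> 1 \<and>
     (\<forall>x y. norm (f x - f y) \<le> C * norm (x - y) powr \<alpha>))"

end

theory Submission
  imports Defs
begin


lemma tri3: "norm (a - b + c) \<le> norm b + norm c + norm (a::'a::real_normed_vector)"
proof -
  have "norm (a - b + c) \<le> norm (a - b) + norm c" by (rule norm_triangle_ineq)
  also have "\<dots> \<le> norm a + norm b + norm c" using norm_triangle_ineq4[of a b] by simp
  finally show ?thesis by simp
qed

context
  fixes b :: "nat \<Rightarrow> 'a::banach"
  assumes basis: "schauder_basis b"
begin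

definition "Sp n x = (\<Sum>k<n. schauder_coeff b x k *\<^sub>R b k)"

lemma coef_lim: "(\<lambda>n. Sp n x) \<longlonglongrightarrow> x"
proof -
  have "\<exists>!\<beta>. (\<lambda>n. \<Sum>k<n. \<beta> k *\<^sub>R b k) \<longlonglongrightarrow> x" using basis unfolding schauder_basis_def by blast
  from theI'[OF this] show ?thesis unfolding Sp_def schauder_coeff_def .
qed

lemma coef_unique: "(\<lambda>n. \<Sum>k<n. a k *\<^sub>R b k) \<longlonglongrightarrow> x \<Longrightarrow> schauder_coeff b x = a"
proof -
  assume h: "(\<lambda>n. \<Sum>k<n. a k *\<^sub>R b k) \<longlonglongrightarrow> x"
  have "\<exists>!\<beta>. (\<lambda>n. \<Sum>k<n. \<beta> k *\<^sub>R b k) \<longlonglongrightarrow> x" using basis unfolding schauder_basis_def by blast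
  then show ?thesis unfolding schauder_coeff_def by (rule the1_equality) (fact h)
qed

lemma coef_add: "schauder_coeff b (x + y) = (\<lambda>k. schauder_coeff b x k + schauder_coeff b y k)"
proof (rule coef_unique)
  have "(\<lambda>n. Sp n x + Sp n y) \<longlonglongrightarrow> x + y" by (intro tendsto_add coef_lim)
  then show "(\<lambda>n. \<Sum>k<n. (schauder_coeff b x k + schauder_coeff b y k) *\<^sub>R b k) \<longlonglongrightarrow> x + y"
    by (simp add: Sp_def scaleR_add_left sum.distrib)
qed

lemma coef_diff: "schauder_coeff b (x - y) = (\<lambda>k. schauder_coeff b x k - schauder_coeff b y k)"
proof (rule coef_unique)
  have "(\<lambda>n. Sp n x - Sp n y) \<longlonglongrightarrow> x - y" by (intro tendsto_diff coef_lim)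
  then show "(\<lambda>n. \<Sum>k<n. (schauder_coeff b x k - schauder_coeff b y k) *\<^sub>R b k) \<longlonglongrightarrow> x - y"
    by (simp add: Sp_def scaleR_diff_left sum_subtractf)
qed

lemma coef_scale: "schauder_coeff b (c *\<^sub>R x) = (\<lambda>k. c * schauder_coeff b x k)"
proof (rule coef_unique)
  have "(\<lambda>n. c *\<^sub>R Sp n x) \<longlonglongrightarrow> c *\<^sub>R x" by (intro tendsto_scaleR tendsto_const coef_lim)
  then show "(\<lambda>n. \<Sum>k<n. (c * schauder_coeff b x k) *\<^sub>R b k) \<longlonglongrightarrow> c *\<^sub>R x"
    by (simp add: Sp_def scaleR_sum_right)
qed

lemma Sp_add: "Sp n (x + y) = Sp n x + Sp n y"
  by (simp add: Sp_def coef_add scaleR_add_left sum.distrib)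
lemma Sp_diff: "Sp n (x - y) = Sp n x - Sp n y"
  by (simp add: Sp_def coef_diff scaleR_diff_left sum_subtractf)
lemma Sp_scale: "Sp n (c *\<^sub>R x) = c *\<^sub>R Sp n x"
  by (simp add: Sp_def coef_scale scaleR_sum_right)

lemma b_nz: "b k \<noteq> 0"
proof
  assume bk: "b k = 0"
  let ?a = "\<lambda>i. if i = k then 1 else (0::real)"
  have "\<And>n. (\<Sum>i<n. ?a i *\<^sub>R b i) = 0"
    by (rule sum.neutral) (auto simp: bk)
  then have "(\<lambda>n. \<Sum>i<n. ?a i *\<^sub>R b i) = (\<lambda>n. 0)" by simp
  then have "schauder_coeff b 0 = ?a" using coef_unique[of ?a 0] by simp
  moreover have "schauder_coeff b 0 = (\<lambda>_. 0)" by (rule coef_unique) simp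
  ultimately show False by (metis zero_neq_one)
qed

lemma Sp_bdd: "bdd_above (range (\<lambda>n. norm (Sp n x)))"
proof -
  have "Bseq (\<lambda>n. Sp n x)" using coef_lim by (intro convergent_imp_Bseq convergentI)
  then obtain B where "\<And>n. norm (Sp n x) \<le> B" unfolding Bseq_def by auto
  then show ?thesis by (intro bdd_aboveI[of _ B]) auto
qed

definition "pn x = (SUP n. norm (Sp n x))"

lemma pn_ge: "norm (Sp n x) \<le> pn x"
  unfolding pn_def by (rule cSUP_upper[OF _ Sp_bdd]) simp

lemma pn_le: "(\<And>n. norm (Sp n x) \<le> c) \<Longrightarrow> pn x \<le> c"
  unfolding pn_def by (rule cSUP_least) auto

lemma norm_le_pn: "norm x \<le> pn x"
proof -
  have "(\<lambda>n. norm (Sp n x)) \<longlonglongrightarrow> norm x" by (intro tendsto_norm coef_lim)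
  then show ?thesis by (rule LIMSEQ_le_const2) (auto intro: pn_ge)
qed

lemma pn_nonneg: "0 \<le> pn x" using norm_le_pn[of x] norm_ge_zero[of x] by linarith

lemma pn_add: "pn (x + y) \<le> pn x + pn y"
  by (rule pn_le) (metis Sp_add add_mono norm_triangle_ineq order_trans pn_ge)

lemma pn_diff: "pn (x - y) \<le> pn x + pn y"
  by (rule pn_le) (metis Sp_diff add_mono norm_triangle_ineq4 order_trans pn_ge)

lemma pn_scale: "pn (c *\<^sub>R x) \<le> \<bar>c\<bar> * pn x"
  by (rule pn_le) (simp add: Sp_scale mult_left_mono pn_ge)

lemma coef_bound: "\<bar>schauder_coeff b x k\<bar> * norm (b k) \<le> 2 * pn x"
proof -
  have "Sp (Suc k) x - Sp k x = schauder_coeff b x k *\<^sub>R b k" by (simp add: Sp_def)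
  then have "\<bar>schauder_coeff b x k\<bar> * norm (b k) = norm (Sp (Suc k) x - Sp k x)" by simp
  also have "\<dots> \<le> norm (Sp (Suc k) x) + norm (Sp k x)" by (rule norm_triangle_ineq4)
  also have "\<dots> \<le> 2 * pn x" using pn_ge[of "Suc k" x] pn_ge[of k x] by simp
  finally show ?thesis .
qed

lemma pn_complete:
  fixes X :: "nat \<Rightarrow> 'a"
  assumes cau: "\<And>e. e > 0 \<Longrightarrow> \<exists>J. \<forall>j\<ge>J. \<forall>l\<ge>J. pn (X j - X l) < e"
  shows "\<exists>z. \<forall>e>0. \<exists>J. \<forall>j\<ge>J. pn (X j - z) \<le> e"
proof -
  have "\<exists>a. (\<lambda>j. schauder_coeff b (X j) k) \<longlonglongrightarrow> a" for k
  proof -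
    have "Cauchy (\<lambda>j. schauder_coeff b (X j) k)"
    proof (rule metric_CauchyI)
      fix e :: real assume e: "e > 0"
      have nb: "norm (b k) > 0" using b_nz by simp
      obtain J where J: "\<forall>j\<ge>J. \<forall>l\<ge>J. pn (X j - X l) < e * norm (b k) / 2"
        using cau[of "e * norm (b k) / 2"] e nb by auto
      show "\<exists>M. \<forall>m\<ge>M. \<forall>n\<ge>M. dist (schauder_coeff b (X m) k) (schauder_coeff b (X n) k) < e"
      proof (intro exI allI impI)
        fix m n assume "m \<ge> J" "n \<ge> J"
        then have "pn (X m - X n) < e * norm (b k) / 2" using J by auto
        moreover have "\<bar>schauder_coeff b (X m - X n) k\<bar> * norm (b k) \<le> 2 * pn (X m - X n)"
          by (rule coef_bound)
        ultimately have "\<bar>schauder_coeff b (X m - X n) k\<bar> * norm (b k) < e * norm (b k)" by linarith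
        then have "\<bar>schauder_coeff b (X m - X n) k\<bar> < e" using nb by simp
        then show "dist (schauder_coeff b (X m) k) (schauder_coeff b (X n) k) < e"
          by (simp add: coef_diff dist_real_def)
      qed
    qed
    then show ?thesis using Cauchy_convergent_iff convergent_def by blast
  qed
  then obtain a where a: "\<And>k. (\<lambda>j. schauder_coeff b (X j) k) \<longlonglongrightarrow> a k" by metis
  define T where "T n = (\<Sum>k<n. a k *\<^sub>R b k)" for n
  have ST: "(\<lambda>j. Sp n (X j)) \<longlonglongrightarrow> T n" for n
    unfolding Sp_def T_def by (intro tendsto_sum tendsto_scaleR a tendsto_const)
  have unif: "\<exists>J. \<forall>j\<ge>J. \<forall>n. norm (Sp n (X j) - T n) \<le> e" if e: "e > 0" for e
  proof -
    obtain J where J: "\<forall>j\<ge>J. \<forall>l\<ge>J. pn (X j - X l) < e" using cau e by blast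
    show ?thesis
    proof (intro exI allI impI)
      fix j n assume j: "j \<ge> J"
      have "(\<lambda>l. norm (Sp n (X j) - Sp n (X l))) \<longlonglongrightarrow> norm (Sp n (X j) - T n)"
        by (intro tendsto_norm tendsto_diff tendsto_const ST)
      moreover have "\<forall>l\<ge>J. norm (Sp n (X j) - Sp n (X l)) \<le> e"
      proof (intro allI impI)
        fix l assume "l \<ge> J"
        then have "pn (X j - X l) < e" using J j by auto
        moreover have "norm (Sp n (X j - X l)) \<le> pn (X j - X l)" by (rule pn_ge)
        ultimately show "norm (Sp n (X j) - Sp n (X l)) \<le> e" by (simp add: Sp_diff)
      qed
      ultimately show "norm (Sp n (X j) - T n) \<le> e" by (intro LIMSEQ_le_const2) auto
    qed
  qed
  have "Cauchy T"
  proof (rule metric_CauchyI)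
    fix e :: real assume e: "e > 0"
    obtain J where J: "\<forall>j\<ge>J. \<forall>n. norm (Sp n (X j) - T n) \<le> e / 4" using unif[of "e/4"] e by auto
    have "Cauchy (\<lambda>n. Sp n (X J))" using coef_lim by (intro convergent_Cauchy convergentI)
    then obtain M where M: "\<forall>m\<ge>M. \<forall>n\<ge>M. dist (Sp m (X J)) (Sp n (X J)) < e / 4"
      using e by (meson metric_CauchyD zero_less_divide_iff zero_less_numeral)
    show "\<exists>M. \<forall>m\<ge>M. \<forall>n\<ge>M. dist (T m) (T n) < e"
    proof (intro exI allI impI)
      fix m n assume mn: "m \<ge> M" "n \<ge> M"
      have "dist (T m) (T n) \<le> norm (Sp m (X J) - T m) + dist (Sp m (X J)) (Sp n (X J)) + norm (Sp n (X J) - T n)"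
      proof -
        have eq: "T m - T n = (Sp n (X J) - T n) - (Sp m (X J) - T m) + (Sp m (X J) - Sp n (X J))"
          by (simp add: algebra_simps)
        show ?thesis unfolding dist_norm eq using tri3 by (smt (verit))
      qed
      also have "\<dots> < e"
        using J[rule_format, of J m] J[rule_format, of J n] M[rule_format, OF mn] e by simp
      finally show "dist (T m) (T n) < e" .
    qed
  qed
  then obtain z where z: "T \<longlonglongrightarrow> z" using Cauchy_convergent_iff convergent_def by blast
  then have "schauder_coeff b z = a" unfolding T_def by (rule coef_unique)
  then have SzT: "Sp n z = T n" for n by (simp add: Sp_def T_def)
  show ?thesis
  proof (rule exI[of _ z], intro allI impI)
    fix e :: real assume "e > 0"
    then obtain J where J: "\<forall>j\<ge>J. \<forall>n. norm (Sp n (X j) - T n) \<le> e" using unif by blast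
    show "\<exists>J. \<forall>j\<ge>J. pn (X j - z) \<le> e"
      by (intro exI allI impI pn_le) (use J in \<open>auto simp: Sp_diff SzT\<close>)
  qed
qed

lemma pn_0: "pn 0 = 0"
  using pn_scale[of 0 0] pn_nonneg[of 0] by simp

lemma pn_neg: "pn (- x) = pn x"
  using pn_scale[of "-1" x] pn_scale[of "-1" "-x"] by simp

lemma pn_sum_le: "pn (\<Sum>i\<in>I. f i) \<le> (\<Sum>i\<in>I. pn (f i))"
proof (induction I rule: infinite_finite_induct)
  case (insert i I)
  then show ?case using pn_add[of "f i" "sum f I"] by simp
qed (auto simp: pn_0)

lemma pn_series:
  fixes xs :: "nat \<Rightarrow> 'a" and c :: "nat \<Rightarrow> real"
  assumes pc: "\<And>i. pn (xs i) \<le> c i" and sc: "summable c"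
    and lim: "(\<lambda>j. \<Sum>i<j. xs i) \<longlonglongrightarrow> y"
  shows "pn y \<le> suminf c"
proof -
  define X where "X j = (\<Sum>i<j. xs i)" for j
  have c0: "c i \<ge> 0" for i using pc[of i] pn_nonneg[of "xs i"] by linarith
  have conv: "(\<lambda>j. \<Sum>i<j. c i) \<longlonglongrightarrow> suminf c" using sc by (simp add: summable_LIMSEQ)
  then have cauc: "Cauchy (\<lambda>j. \<Sum>i<j. c i)" by (rule LIMSEQ_imp_Cauchy)
  have diffle: "pn (X j - X l) \<le> \<bar>(\<Sum>i<j. c i) - (\<Sum>i<l. c i)\<bar>" if jl: "l \<le> j" for j l
  proof -
    have "X j - X l = (\<Sum>i\<in>{l..<j}. xs i)" unfolding X_def using jl
      by (metis sum_diff_nat_ivl lessThan_atLeast0 zero_le)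
    moreover have "(\<Sum>i<j. c i) - (\<Sum>i<l. c i) = (\<Sum>i\<in>{l..<j}. c i)" using jl
      by (metis sum_diff_nat_ivl lessThan_atLeast0 zero_le)
    moreover have "pn (\<Sum>i\<in>{l..<j}. xs i) \<le> (\<Sum>i\<in>{l..<j}. c i)"
      using pn_sum_le[of xs "{l..<j}"] sum_mono[of "{l..<j}" "\<lambda>i. pn (xs i)" c] pc by force
    ultimately show ?thesis by simp
  qed
  have "\<exists>J. \<forall>j\<ge>J. \<forall>l\<ge>J. pn (X j - X l) < e" if e: "e > 0" for e
  proof -
    obtain M where M: "\<forall>m\<ge>M. \<forall>n\<ge>M. dist (\<Sum>i<m. c i) (\<Sum>i<n. c i) < e"
      using metric_CauchyD[OF cauc e] by blast
    show ?thesis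
    proof (intro exI allI impI)
      fix j l assume jl: "j \<ge> M" "l \<ge> M"
      show "pn (X j - X l) < e"
      proof (cases "l \<le> j")
        case True
        then show ?thesis using diffle[OF True] M[rule_format, OF jl] by (simp add: dist_real_def)
      next
        case False
        then have "pn (X l - X j) < e" using diffle[of j l] M[rule_format, OF jl(2) jl(1)] by (simp add: dist_real_def)
        then show ?thesis using pn_neg[of "X l - X j"] by simp
      qed
    qed
  qed
  then obtain z where z: "\<forall>e>0. \<exists>J. \<forall>j\<ge>J. pn (X j - z) \<le> e" using pn_complete by blast
  have "X \<longlonglongrightarrow> z"
  proof (rule LIMSEQ_I)
    fix r :: real assume "r > 0"
    then obtain J where J: "\<forall>j\<ge>J. pn (X j - z) \<le> r / 2" using z by (meson half_gt_zero)
    show "\<exists>no. \<forall>n\<ge>no. norm (X n - z) < r"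
      using J norm_le_pn \<open>r > 0\<close> by (smt (verit) field_sum_of_halves)
  qed
  moreover have "X \<longlonglongrightarrow> y" using lim unfolding X_def .
  ultimately have zy: "z = y" using LIMSEQ_unique by blast
  show ?thesis
  proof (rule field_le_epsilon)
    fix e :: real assume "e > 0"
    then obtain J where J: "\<forall>j\<ge>J. pn (X j - y) \<le> e" using z zy by blast
    have "pn y \<le> pn (X J) + pn (X J - y)"
      using pn_diff[of "X J" "X J - y"] by simp
    also have "pn (X J) \<le> (\<Sum>i<J. c i)"
      unfolding X_def using pn_sum_le[of xs "{..<J}"] sum_mono[of "{..<J}" "\<lambda>i. pn (xs i)" c] pc by force
    also have "(\<Sum>i<J. c i) \<le> suminf c" using sc c0 by (intro sum_le_suminf) auto
    finally show "pn y \<le> suminf c + e" using J[rule_format, of J] by simp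
  qed
qed

lemma baire_step: "\<exists>m::nat. interior (closure {x. pn x \<le> real m}) \<noteq> {}"
proof (rule ccontr)
  assume "\<not> ?thesis"
  then have emp: "\<And>m::nat. interior (closure {x. pn x \<le> real m}) = {}" by blast
  let ?G = "range (\<lambda>m::nat. closure {x. pn x \<le> real m})"
  have "euclidean interior_of \<Union>?G = {}"
  proof (rule Baire_category_alt)
    show "completely_metrizable_space (euclidean::'a topology) \<or>
      locally_compact_space (euclidean::'a topology) \<and> regular_space (euclidean::'a topology)"
      using completely_metrizable_space_euclidean by blast
    show "countable ?G" by simp
    fix T assume "T \<in> ?G"
    then obtain m :: nat where T: "T = closure {x. pn x \<le> real m}" by blast
    have "closed T" unfolding T by (rule closed_closure)
    then show "closedin euclidean T \<and> euclidean interior_of T = {}"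
      unfolding closed_closedin euclidean_interior_of T using emp[of m] by simp
  qed
  moreover have "\<Union>?G = UNIV"
  proof -
    have "x \<in> \<Union>?G" for x
    proof -
      obtain m :: nat where "pn x \<le> real m" using real_arch_simple by blast
      then have "x \<in> closure {x. pn x \<le> real m}" using closure_subset[of "{x. pn x \<le> real m}"] by blast
      then show ?thesis by (rule UN_I[rotated]) simp
    qed
    then show ?thesis by blast
  qed
  ultimately show False by simp
qed

lemma approx_step: "\<exists>D\<ge>0. \<forall>y \<eta>. \<eta> > 0 \<longrightarrow> (\<exists>x. pn x \<le> D * norm y \<and> norm (y - x) < \<eta>)"
proof -
  obtain m :: nat where "interior (closure {x. pn x \<le> real m}) \<noteq> {}" using baire_step by blast
  then obtain x0 where "x0 \<in> interior (closure {x. pn x \<le> real m})" by blast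
  then obtain r where r: "r > 0" and ball: "ball x0 r \<subseteq> closure {x. pn x \<le> real m}"
    unfolding mem_interior by blast
  have small: "\<exists>x. pn x \<le> 2 * real m \<and> norm (y - x) < \<eta>" if y: "norm y < r" and eta: "\<eta> > 0" for y \<eta>
  proof -
    have e2: "\<eta> / 2 > 0" using eta by simp
    have "dist x0 (x0 + y) < r" using y by (simp add: dist_norm)
    then have "x0 + y \<in> ball x0 r" by (simp only: mem_ball)
    then have "x0 + y \<in> closure {x. pn x \<le> real m}" using ball by (rule rev_subsetD)
    then have "\<forall>e>0. \<exists>u\<in>{x. pn x \<le> real m}. dist u (x0 + y) < e" by (simp only: closure_approachable)
    then obtain u where u: "pn u \<le> real m" "dist u (x0 + y) < \<eta> / 2"
      using e2 by blast
    have "x0 \<in> ball x0 r" using r by (rule centre_in_ball[THEN iffD2])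
    then have "x0 \<in> closure {x. pn x \<le> real m}" using ball by (rule rev_subsetD)
    then have "\<forall>e>0. \<exists>u\<in>{x. pn x \<le> real m}. dist u x0 < e" by (simp only: closure_approachable)
    then obtain v where v: "pn v \<le> real m" "dist v x0 < \<eta> / 2"
      using e2 by blast
    have "pn (u - v) \<le> 2 * real m" using pn_diff[of u v] u v by simp
    moreover have "norm (y - (u - v)) < \<eta>"
    proof -
      have eq: "y - (u - v) = (x0 + y - u) - (x0 - v)" by (simp add: algebra_simps)
      have "norm (y - (u - v)) \<le> norm (x0 + y - u) + norm (x0 - v)"
        unfolding eq by (rule norm_triangle_ineq4)
      moreover have "norm (x0 + y - u) = dist u (x0 + y)" by (simp add: dist_norm norm_minus_commute)
      moreover have "norm (x0 - v) = dist v x0" by (simp add: dist_norm norm_minus_commute)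
      ultimately show ?thesis using u(2) v(2) by linarith
    qed
    ultimately show ?thesis by blast
  qed
  define D where "D = 4 * real m / r"
  have "D \<ge> 0" using r by (simp add: D_def)
  moreover have "\<exists>x. pn x \<le> D * norm y \<and> norm (y - x) < \<eta>" if eta: "\<eta> > 0" for y \<eta>
  proof (cases "y = 0")
    case True
    then show ?thesis using eta by (intro exI[of _ 0]) (simp add: pn_0)
  next
    case False
    define s where "s = r / (2 * norm y)"
    have s: "s > 0" using r False by (simp add: s_def)
    have "norm (s *\<^sub>R y) < r" using r False s by (simp add: s_def)
    then obtain x' where x': "pn x' \<le> 2 * real m" "norm (s *\<^sub>R y - x') < \<eta> * s"
      using small[of "s *\<^sub>R y" "\<eta> * s"] eta s by auto
    have "pn ((1/s) *\<^sub>R x') \<le> \<bar>1/s\<bar> * pn x'" by (rule pn_scale)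
    also have "\<dots> = (1/s) * pn x'" using s by simp
    also have "\<dots> \<le> (1/s) * (2 * real m)" using x'(1) s by (intro mult_left_mono) auto
    also have "(1/s) * (2 * real m) = D * norm y" using r False by (simp add: s_def D_def field_simps)
    finally have 1: "pn ((1/s) *\<^sub>R x') \<le> D * norm y" .
    have "y - (1/s) *\<^sub>R x' = (1/s) *\<^sub>R (s *\<^sub>R y - x')" using s by (simp add: algebra_simps)
    then have "norm (y - (1/s) *\<^sub>R x') = (1/s) * norm (s *\<^sub>R y - x')" using s by simp
    also have "\<dots> < (1/s) * (\<eta> * s)" using x'(2) s by (intro mult_strict_left_mono) auto
    also have "\<dots> = \<eta>" using s by simp
    finally show ?thesis using 1 by blast
  qed
  ultimately show ?thesis by blast
qed

lemma pn_bounded: "\<exists>C\<ge>0. \<forall>x. pn x \<le> C * norm x"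
proof -
  obtain D where D: "D \<ge> 0" "\<And>y \<eta>. \<eta> > 0 \<Longrightarrow> \<exists>x. pn x \<le> D * norm y \<and> norm (y - x) < \<eta>"
    using approx_step by blast
  have "\<forall>y \<eta>. \<exists>x. \<eta> > 0 \<longrightarrow> pn x \<le> D * norm y \<and> norm (y - x) < \<eta>"
    using D(2) by blast
  then obtain A where A0: "\<forall>y \<eta>. \<eta> > 0 \<longrightarrow> pn (A y \<eta>) \<le> D * norm y \<and> norm (y - A y \<eta>) < \<eta>"
    by metis
  have A: "\<And>y \<eta>. \<eta> > 0 \<Longrightarrow> pn (A y \<eta>) \<le> D * norm y \<and> norm (y - A y \<eta>) < \<eta>"
    using A0 by blast
  have "pn y \<le> (2 * D) * norm y" for y
  proof (cases "y = 0")
    case True then show ?thesis by (simp add: pn_0)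
  next
    case False
    define t where "t = norm y"
    have t: "t > 0" using False by (simp add: t_def)
    define R where "R = rec_nat y (\<lambda>i z. z - A z (t / 2 ^ Suc i))"
    have R0: "R 0 = y" and RS: "R (Suc i) = R i - A (R i) (t / 2 ^ Suc i)" for i
      by (simp_all add: R_def)
    define xs where "xs i = A (R i) (t / 2 ^ Suc i)" for i
    have Rn: "norm (R i) \<le> t / 2 ^ i" for i
    proof (cases i)
      case 0 then show ?thesis by (simp add: R0 t_def)
    next
      case (Suc j)
      have "norm (R (Suc j)) < t / 2 ^ Suc j" unfolding RS using A[of "t / 2 ^ Suc j" "R j"] t by simp
      then show ?thesis using Suc by simp
    qed
    have pxs: "pn (xs i) \<le> D * t * (1/2) ^ i" for i
    proof -
      have "pn (xs i) \<le> D * norm (R i)" unfolding xs_def using A[of "t / 2 ^ Suc i" "R i"] t by simp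
      also have "\<dots> \<le> D * (t / 2 ^ i)" using Rn[of i] D(1) by (rule mult_left_mono)
      finally show ?thesis by (simp add: power_one_over)
    qed
    have sumR: "(\<Sum>i<j. xs i) = y - R j" for j
      by (induction j) (simp_all add: R0 RS xs_def)
    have "(\<lambda>j. (\<Sum>i<j. xs i)) \<longlonglongrightarrow> y"
    proof -
      have l1: "(\<lambda>j. t / 2 ^ j) \<longlonglongrightarrow> 0"
        by (intro LIMSEQ_divide_realpow_zero) auto
      have l2: "eventually (\<lambda>j. norm (R j) \<le> t / 2 ^ j) sequentially"
        using Rn by (intro always_eventually) auto
      have "(\<lambda>j. R j) \<longlonglongrightarrow> 0" by (rule Lim_null_comparison[OF l2 l1])
      then have "(\<lambda>j. y - R j) \<longlonglongrightarrow> y - 0" by (intro tendsto_diff tendsto_const)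
      then show ?thesis unfolding sumR by simp
    qed
    moreover have "summable (\<lambda>i. D * t * (1/2::real) ^ i)"
      by (intro summable_mult summable_geometric) simp
    ultimately have "pn y \<le> (\<Sum>i. D * t * (1/2::real) ^ i)"
      using pn_series[of xs "\<lambda>i. D * t * (1/2) ^ i", OF pxs] by blast
    also have "\<dots> = D * t * 2" 
      using suminf_mult[of "\<lambda>i. (1/2::real) ^ i" "D * t"] summable_geometric[of "1/2::real"]
        suminf_geometric[of "1/2::real"] by simp
    finally show ?thesis by (simp add: t_def)
  qed
  then show ?thesis using D(1) by (intro exI[of _ "2 * D"]) auto
qed

end



lemma proj_term:
  fixes u v tau :: real
  assumes "0 \<le> v"
  shows "(u - v)^2 \<ge> (u - max (u - tau) 0)^2 + 2 * tau * (max (u - tau) 0 - v) + (max (u - tau) 0 - v)^2"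
proof (cases "u > tau")
  case True
  then show ?thesis by (simp add: power2_eq_square algebra_simps)
next
  case False
  then have "u * v \<le> tau * v" using assms by (intro mult_right_mono) auto
  then show ?thesis using False by (simp add: power2_eq_square algebra_simps)
qed

lemma proj_simplex_prop:
  assumes N: "N \<ge> 1"
  shows "proj_simplex N u \<in> prob_simplex N \<and>
    (\<forall>j<N. proj_simplex N u j \<noteq> 0 \<longrightarrow> (\<forall>i<N. u i - 1 \<le> u j))"
proof -
  define M where "M = Max (u ` {..<N})"
  have fin: "finite (u ` {..<N})" by simp
  have ne: "u ` {..<N} \<noteq> {}" using N by (simp add: lessThan_empty_iff)
  have uM: "u i \<le> M" if "i < N" for i unfolding M_def using fin that by (intro Max_ge) auto
  obtain i0 where i0: "i0 < N" "u i0 = M" unfolding M_def using Max_in[OF fin ne] by auto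
  define h where "h \<tau> = (\<Sum>i<N. max (u i - \<tau>) 0)" for \<tau>
  have hM: "h M \<le> 1" unfolding h_def using uM by (simp add: max_def)
  have "max (u i0 - (M - 1)) 0 \<le> h (M - 1)" unfolding h_def
    using i0(1) by (intro member_le_sum) auto
  then have hM1: "1 \<le> h (M - 1)" using i0 by simp
  have cont: "isCont h x" for x unfolding h_def by (intro continuous_intros)
  obtain \<tau> where tau: "M - 1 \<le> \<tau>" "\<tau> \<le> M" "h \<tau> = 1"
    using IVT2[of h M 1 "M - 1"] hM hM1 cont by auto
  define w where "w i = (if i < N then max (u i - \<tau>) 0 else 0)" for i
  have sw: "(\<Sum>i<N. w i) = 1" using tau(3) unfolding h_def w_def by simp
  have w0: "0 \<le> w i" for i by (simp add: w_def)
  have w1: "w i \<le> 1" for i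
  proof (cases "i < N")
    case True
    then have "w i \<le> (\<Sum>i<N. w i)" using w0 by (intro member_le_sum) auto
    then show ?thesis using sw by simp
  qed (simp add: w_def)
  have wN: "\<forall>i\<ge>N. w i = 0" by (simp add: w_def)
  have wS: "w \<in> prob_simplex N" unfolding prob_simplex_def euclid_def using sw w0 w1 wN by blast
  have key: "(\<Sum>i<N. (u i - v i)^2) \<ge> (\<Sum>i<N. (u i - w i)^2) + (\<Sum>i<N. (w i - v i)^2)"
    if v: "v \<in> prob_simplex N" for v
  proof -
    have v0: "\<And>i. i < N \<Longrightarrow> 0 \<le> v i" and sv: "(\<Sum>i<N. v i) = 1"
      using v unfolding prob_simplex_def by auto
    have "(\<Sum>i<N. (u i - v i)^2) \<ge> (\<Sum>i<N. (u i - w i)^2 + 2 * \<tau> * (w i - v i) + (w i - v i)^2)"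
      using v0 by (intro sum_mono) (simp add: w_def proj_term)
    also have "(\<Sum>i<N. (u i - w i)^2 + 2 * \<tau> * (w i - v i) + (w i - v i)^2) =
       (\<Sum>i<N. (u i - w i)^2) + 2 * \<tau> * ((\<Sum>i<N. w i) - (\<Sum>i<N. v i)) + (\<Sum>i<N. (w i - v i)^2)"
      by (simp add: sum.distrib sum_distrib_left sum_subtractf algebra_simps)
    finally show ?thesis using sw sv by simp
  qed
  have en: "enorm N x \<le> enorm N y \<longleftrightarrow> (\<Sum>i<N. (x i)^2) \<le> (\<Sum>i<N. (y i)^2)" for x y
    unfolding enorm_def by (simp add: sum_nonneg)
  have P: "w \<in> prob_simplex N \<and> (\<forall>v\<in>prob_simplex N. enorm N (u - w) \<le> enorm N (u - v))"
  proof (intro conjI ballI wS)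
    fix v assume "v \<in> prob_simplex N"
    from key[OF this] have "(\<Sum>i<N. (u i - w i)^2) \<le> (\<Sum>i<N. (u i - v i)^2)"
      by (smt (verit) sum_nonneg zero_le_power2)
    then show "enorm N (u - w) \<le> enorm N (u - v)" by (simp add: en)
  qed
  have U: "w' = w" if w': "w' \<in> prob_simplex N \<and> (\<forall>v\<in>prob_simplex N. enorm N (u - w') \<le> enorm N (u - v))" for w'
  proof
    fix i
    have "enorm N (u - w') \<le> enorm N (u - w)" using w' wS by blast
    then have "(\<Sum>i<N. (u i - w' i)^2) \<le> (\<Sum>i<N. (u i - w i)^2)" by (simp add: en)
    with key[of w'] w' have s0: "(\<Sum>i<N. (w i - w' i)^2) \<le> 0" by simp
    have "\<forall>i\<in>{..<N}. (w i - w' i)^2 = 0"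
      proof (subst sum_nonneg_eq_0_iff[symmetric])
      have "0 \<le> (\<Sum>i<N. (w i - w' i)^2)" by (rule sum_nonneg) simp
      then show "(\<Sum>i<N. (w i - w' i)^2) = 0" using s0 by linarith
    qed auto
    then show "w' i = w i"
    proof (cases "i < N")
      case False
      then show ?thesis using w' unfolding prob_simplex_def euclid_def by (simp add: w_def)
    qed auto
  qed
  have eq: "proj_simplex N u = w" unfolding proj_simplex_def
    by (rule the_equality) (rule P, rule U)
  show ?thesis
  proof (intro conjI allI impI)
    show "proj_simplex N u \<in> prob_simplex N" using eq wS by simp
    fix j i assume j: "j < N" and nz: "proj_simplex N u j \<noteq> 0" and i: "i < N"
    have "u j > \<tau>" using nz j eq by (auto simp: w_def max_def split: if_splits)
    then show "u i - 1 \<le> u j" using uM[OF i] tau(1) by linarith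
  qed
qed




lemma tri3p: "norm (a + b + c) \<le> norm a + norm b + norm (c::'a::real_normed_vector)"
proof -
  have "norm (a + b + c) \<le> norm (a + b) + norm c" by (rule norm_triangle_ineq)
  also have "\<dots> \<le> norm a + norm b + norm c" using norm_triangle_ineq[of a b] by simp
  finally show ?thesis .
qed

context
  fixes b :: "nat \<Rightarrow> 'a::banach"
  assumes basis: "schauder_basis b"
begin

lemma coef_bl: "bounded_linear (\<lambda>x. schauder_coeff b x k)"
proof -
  obtain C where C: "C \<ge> 0" "\<And>x. pn b x \<le> C * norm x" using pn_bounded[OF basis] by blast
  have nb: "norm (b k) > 0" using b_nz[OF basis] by simp
  show ?thesis
  proof (rule bounded_linear_intro[where K = "2 * C / norm (b k)"])
    show "schauder_coeff b (x + y) k = schauder_coeff b x k + schauder_coeff b y k" for x y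
      by (simp add: coef_add[OF basis])
    show "schauder_coeff b (r *\<^sub>R x) k = r *\<^sub>R schauder_coeff b x k" for r x
      by (simp add: coef_scale[OF basis])
    show "norm (schauder_coeff b x k) \<le> norm x * (2 * C / norm (b k))" for x
    proof -
      have "\<bar>schauder_coeff b x k\<bar> * norm (b k) \<le> 2 * C * norm x"
        using coef_bound[OF basis, of x k] C(2)[of x] by linarith
      then show ?thesis using nb by (simp add: field_simps)
    qed
  qed
qed

lemma uniform_tail:
  assumes "compact K" "\<rho> > 0"
  shows "\<exists>n\<ge>1. \<forall>x\<in>K. norm (x - Sp b n x) < \<rho>"
proof -
  obtain C where C: "C \<ge> 0" "\<And>x. pn b x \<le> C * norm x" using pn_bounded[OF basis] by blast
  define \<eta> where "\<eta> = \<rho> / (4 * (C + 1))"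
  have eta: "\<eta> > 0" using C assms by (simp add: \<eta>_def)
  have ceta: "(C + 1) * \<eta> = \<rho> / 4" using C(1) unfolding \<eta>_def by (simp add: field_simps)
  obtain F where F: "F \<subseteq> K" "finite F" "K \<subseteq> (\<Union>c\<in>F. ball c \<eta>)"
  proof -
    have cov: "K \<subseteq> (\<Union>c\<in>K. ball c \<eta>)" using eta by auto
    show ?thesis by (rule compactE_image[OF assms(1) open_ball cov]) (rule that)
  qed
  have "\<forall>x'\<in>F. eventually (\<lambda>m. norm (Sp b m x' - x') < \<rho> / 2) sequentially"
  proof
    fix x' assume "x' \<in> F"
    have "(\<lambda>m. Sp b m x') \<longlonglongrightarrow> x'" by (rule coef_lim[OF basis])
    then show "eventually (\<lambda>m. norm (Sp b m x' - x') < \<rho> / 2) sequentially"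
      using assms(2) unfolding tendsto_iff dist_norm by (meson half_gt_zero)
  qed
  then have "eventually (\<lambda>m. \<forall>x'\<in>F. norm (Sp b m x' - x') < \<rho> / 2) sequentially"
    using F(2) by (simp add: eventually_ball_finite)
  then obtain N where N: "\<And>m. m \<ge> N \<Longrightarrow> \<forall>x'\<in>F. norm (Sp b m x' - x') < \<rho> / 2"
    unfolding eventually_sequentially by blast
  define n where "n = max N 1"
  have "norm (x - Sp b n x) < \<rho>" if x: "x \<in> K" for x
  proof -
    obtain x' where x': "x' \<in> F" "dist x' x < \<eta>" using F(3) x by auto
    have "x - Sp b n x = (x - x') + (x' - Sp b n x') + Sp b n (x' - x)"
      by (simp add: Sp_diff[OF basis] algebra_simps)
    then have "norm (x - Sp b n x) \<le> norm (x - x') + norm (x' - Sp b n x') + norm (Sp b n (x' - x))"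
      using tri3p by metis
    also have "norm (Sp b n (x' - x)) \<le> C * norm (x' - x)"
      using pn_ge[OF basis, of n "x' - x"] C(2)[of "x' - x"] by linarith
    also have "norm (x' - Sp b n x') < \<rho> / 2"
      using N[of n] x' by (simp add: n_def norm_minus_commute)
    finally have "norm (x - Sp b n x) < norm (x - x') + \<rho> / 2 + C * norm (x' - x)" by simp
    moreover have "norm (x - x') + C * norm (x' - x) \<le> (C + 1) * \<eta>"
    proof -
      have d: "norm (x' - x) < \<eta>" "norm (x - x') = norm (x' - x)" using x'(2) by (simp_all add: dist_norm norm_minus_commute)
      have "C * norm (x' - x) \<le> C * \<eta>" using d(1) C(1) by (intro mult_left_mono) auto
      then show ?thesis using d by (simp add: algebra_simps)
    qed
    ultimately show ?thesis using ceta assms(2) by linarith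
  qed
  then show ?thesis by (intro exI[of _ n]) (auto simp: n_def)
qed

end



lemma enorm_coord: "i < n \<Longrightarrow> \<bar>v i\<bar> \<le> enorm n v"
proof -
  assume i: "i < n"
  have "(v i)^2 \<le> (\<Sum>k<n. (v k)^2)" using i by (intro member_le_sum) auto
  then have "sqrt ((v i)^2) \<le> enorm n v" unfolding enorm_def by (rule real_sqrt_le_mono)
  then show ?thesis by simp
qed

lemma enorm_le_bound:
  assumes M: "M \<ge> 0" and a: "\<And>i. i < N \<Longrightarrow> \<bar>a i\<bar> \<le> M"
  shows "enorm N a \<le> real N * M"
proof -
  have "(\<Sum>i<N. (a i)^2) \<le> (\<Sum>i<N. M^2)"
  proof (intro sum_mono)
    fix i assume "i \<in> {..<N}"
    then have "\<bar>a i\<bar> \<le> M" using a by auto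
    then have "\<bar>a i\<bar>^2 \<le> M^2" by (intro power_mono) auto
    then show "(a i)^2 \<le> M^2" by simp
  qed
  also have "\<dots> = real N * M^2" by simp
  also have "\<dots> \<le> (real N)^2 * M^2"
  proof (cases N)
    case 0 then show ?thesis by simp
  next
    case (Suc m)
    then have "real N \<le> (real N)^2" by (simp add: power2_eq_square)
    then show ?thesis by (intro mult_right_mono) auto
  qed
  also have "\<dots> = (real N * M)^2" by (simp add: power_mult_distrib)
  finally have "enorm N a \<le> sqrt ((real N * M)^2)" unfolding enorm_def by (rule real_sqrt_le_mono)
  then show ?thesis using M by simp
qed

lemma holder_rho:
  assumes "holder_continuous f" "\<epsilon> > 0"
  shows "\<exists>\<rho>>0. \<forall>x y. norm (x - y) < \<rho> \<longrightarrow> norm (f x - f y) < \<epsilon>"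
proof -
  obtain C \<alpha> where C: "0 \<le> C" "0 < \<alpha>" "\<alpha> \<le> 1" "\<And>x y. norm (f x - f y) \<le> C * norm (x - y) powr \<alpha>"
    using assms(1) unfolding holder_continuous_def by blast
  define a where "a = \<epsilon> / (C + 1)"
  have a: "a > 0" using C assms by (simp add: a_def)
  define \<rho> where "\<rho> = a powr (1 / \<alpha>)"
  have rho: "\<rho> > 0" using a by (simp add: \<rho>_def)
  have rhoa: "\<rho> powr \<alpha> = a" using a C(2) by (simp add: \<rho>_def powr_powr)
  have "norm (f x - f y) < \<epsilon>" if xy: "norm (x - y) < \<rho>" for x y
  proof -
    have "norm (x - y) powr \<alpha> < \<rho> powr \<alpha>" using xy C(2) by (intro powr_less_mono2) auto
    then have lt: "norm (x - y) powr \<alpha> < a" using rhoa by simp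
    have "norm (f x - f y) \<le> C * norm (x - y) powr \<alpha>" by (rule C(4))
    also have "\<dots> \<le> (C + 1) * norm (x - y) powr \<alpha>" by (intro mult_right_mono) auto
    also have "\<dots> < (C + 1) * a" using lt C(1) by (intro mult_strict_left_mono) auto
    also have "\<dots> = \<epsilon>" using C(1) by (simp add: a_def)
    finally show ?thesis .
  qed
  then show ?thesis using rho by blast
qed

lemma modulus_lin: "W \<ge> 0 \<Longrightarrow> modulus (\<lambda>t. W * t)"
  unfolding modulus_def
  by (auto intro!: continuous_intros mono_onI mult_left_mono)

lemma F_nonempty:
  assumes "universal_approximator F"
  shows "\<exists>g. g \<in> F n m c"
proof -
  have "\<exists>r. \<forall>\<omega> n m f K c. modulus \<omega> \<longrightarrow> unif_cont_mod \<omega> n m f \<longrightarrow>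
          compact K \<longrightarrow> K \<subseteq> euclid n \<longrightarrow>
          (\<exists>g\<in>F n m c. \<forall>v\<in>K. enorm m (f v - g v) \<le> r \<omega> K n m c)"
    using assms unfolding universal_approximator_def by (elim conjE exE) (rule exI, assumption)
  then obtain r where r0: "\<forall>\<omega> n m f K c. modulus \<omega> \<longrightarrow> unif_cont_mod \<omega> n m f \<longrightarrow>
          compact K \<longrightarrow> K \<subseteq> euclid n \<longrightarrow>
          (\<exists>g\<in>F n m c. \<forall>v\<in>K. enorm m (f v - g v) \<le> r \<omega> K n m c)" by (rule exE)
  note r = r0[rule_format]
  have "modulus (\<lambda>t. 0 * t)" by (rule modulus_lin) simp
  moreover have "unif_cont_mod (\<lambda>t. 0 * t) n m (\<lambda>v i. 0)"
    unfolding unif_cont_mod_def euclid_def enorm_def by (simp add: fun_diff_def)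
  ultimately show ?thesis using r[of "\<lambda>t. 0 * t" n m "\<lambda>v i. 0" "{}" c] by auto
qed

theorem mainTheorem13:
  fixes xb :: "nat \<Rightarrow> 'a::banach" and yb :: "nat \<Rightarrow> 'b::banach"
    and f :: "'a \<Rightarrow> 'b"
    and F :: "nat \<Rightarrow> nat \<Rightarrow> nat \<Rightarrow> ((nat \<Rightarrow> real) \<Rightarrow> (nat \<Rightarrow> real)) set"
  assumes "infinite_dimensional TYPE('a)" and "infinite_dimensional TYPE('b)"
    and "schauder_basis xb" and "schauder_basis yb"
    and "holder_continuous f"
    and "universal_approximator F"
    and "\<epsilon> > 0" and "compact K"
  shows "\<exists>n N q fh z. n \<ge> 1 \<and> N \<ge> 1 \<and> q \<ge> 1 \<and> fh \<in> (\<Union>c. F n N c) \<and>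
    (\<exists>\<delta><\<epsilon>. \<forall>x\<in>K.
       norm ((\<Sum>j<N. \<Sum>i<q.
               (proj_simplex N (fh (\<lambda>k. if k < n then schauder_coeff xb x k else 0)) j
                 * z j i) *\<^sub>R yb i) - f x) \<le> \<delta>)"
proof (cases "K = {}")
  case True
  obtain g where "g \<in> F 1 1 0" using F_nonempty[OF assms(6)] by blast
  then show ?thesis using True assms(7)
    by (intro exI[of _ 1] exI[of _ g] exI[of _ "\<lambda>_ _. 0"]) auto
next
  case Kne: False
  note hx = assms(3) and hy = assms(4) and eps = assms(7) and cK = assms(8)
  obtain \<rho> where rho: "\<rho> > 0" "\<And>x y. norm (x - y) < \<rho> \<Longrightarrow> norm (f x - f y) < \<epsilon> / 4"
    using holder_rho[OF assms(5), of "\<epsilon> / 4"] eps by auto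
  have r4: "\<rho> / 4 > 0" using rho by simp
  obtain Fn where Fn: "Fn \<subseteq> K" "finite Fn" "K \<subseteq> (\<Union>c\<in>Fn. ball c (\<rho> / 4))"
  proof -
    have cov: "K \<subseteq> (\<Union>c\<in>K. ball c (\<rho> / 4))" using r4 by auto
    show ?thesis by (rule compactE_image[OF cK open_ball cov]) (rule that)
  qed
  define N where "N = card Fn"
  obtain xn where xn: "bij_betw xn {0..<N} Fn" using ex_bij_betw_nat_finite[OF Fn(2)] unfolding N_def by blast
  have xn_img: "xn ` {..<N} = Fn" using xn by (simp add: bij_betw_def atLeast0LessThan)
  have FnK: "xn j \<in> K" if "j < N" for j using xn_img Fn(1) that by blast
  have "Fn \<noteq> {}" using Kne Fn(3) by auto
  then have N1: "N \<ge> 1" using Fn(2) by (simp add: N_def Suc_le_eq card_gt_0_iff)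
  have near: "\<exists>j<N. dist (xn j) x < \<rho> / 4" if xK: "x \<in> K" for x
  proof -
    obtain c where "c \<in> Fn" "x \<in> ball c (\<rho> / 4)" using Fn(3) xK by blast
    then show ?thesis using xn_img by (auto simp: dist_commute)
  qed
  obtain n where n: "n \<ge> 1" "\<And>x. x \<in> K \<Longrightarrow> norm (x - Sp xb n x) < \<rho> / 4"
    using uniform_tail[OF hx cK r4] by blast
  have e4: "\<epsilon> / 4 > 0" using eps by simp
  have "\<forall>j\<in>{..<N}. eventually (\<lambda>q. norm (Sp yb q (f (xn j)) - f (xn j)) < \<epsilon> / 4) sequentially"
  proof
    fix j assume "j \<in> {..<N}"
    have "(\<lambda>q. Sp yb q (f (xn j))) \<longlonglongrightarrow> f (xn j)" by (rule coef_lim[OF hy])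
    then show "eventually (\<lambda>q. norm (Sp yb q (f (xn j)) - f (xn j)) < \<epsilon> / 4) sequentially"
      using e4 unfolding tendsto_iff dist_norm by blast
  qed
  then have "eventually (\<lambda>q. \<forall>j\<in>{..<N}. norm (Sp yb q (f (xn j)) - f (xn j)) < \<epsilon> / 4) sequentially"
    by (simp add: eventually_ball_finite)
  then obtain Q where Q: "\<And>q. q \<ge> Q \<Longrightarrow> \<forall>j\<in>{..<N}. norm (Sp yb q (f (xn j)) - f (xn j)) < \<epsilon> / 4"
    unfolding eventually_sequentially by blast
  define q where "q = max Q 1"
  have q1: "q \<ge> 1" by (simp add: q_def)
  have Yj: "norm (Sp yb q (f (xn j)) - f (xn j)) < \<epsilon> / 4" if "j < N" for j
    using Q[of q] that by (simp add: q_def)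
  define z where "z j i = schauder_coeff yb (f (xn j)) i" for j i
  define L where "L = 6 / \<rho>"
  have L: "L > 0" using rho by (simp add: L_def)
  define u where "u v = (\<Sum>k<n. v k *\<^sub>R xb k)" for v :: "nat \<Rightarrow> real"
  define g where "g v = (\<lambda>j. if j < N then - L * norm (u v - xn j) else 0)" for v
  define B where "B = (\<Sum>k<n. norm (xb k))"
  have B0: "B \<ge> 0" by (simp add: B_def sum_nonneg)
  define W where "W = real N * (L * B)"
  have W0: "W \<ge> 0" using L B0 by (simp add: W_def)
  have ulip: "norm (u v1 - u v2) \<le> B * enorm n (v1 - v2)" for v1 v2
  proof -
    have "u v1 - u v2 = (\<Sum>k<n. (v1 k - v2 k) *\<^sub>R xb k)"
      by (simp add: u_def scaleR_diff_left sum_subtractf)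
    then have "norm (u v1 - u v2) \<le> (\<Sum>k<n. norm ((v1 k - v2 k) *\<^sub>R xb k))"
      using norm_sum[of "\<lambda>k. (v1 k - v2 k) *\<^sub>R xb k" "{..<n}"] by simp
    also have "\<dots> \<le> (\<Sum>k<n. enorm n (v1 - v2) * norm (xb k))"
    proof (intro sum_mono)
      fix k assume "k \<in> {..<n}"
      then have "\<bar>v1 k - v2 k\<bar> \<le> enorm n (v1 - v2)" using enorm_coord[of k n "v1 - v2"] by simp
      then show "norm ((v1 k - v2 k) *\<^sub>R xb k) \<le> enorm n (v1 - v2) * norm (xb k)"
        by (simp add: mult_right_mono)
    qed
    also have "\<dots> = B * enorm n (v1 - v2)" by (simp add: B_def sum_distrib_left sum_distrib_right mult.commute)
    finally show ?thesis .
  qed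
  have ucm: "unif_cont_mod (\<lambda>t. W * t) n N g"
    unfolding unif_cont_mod_def
  proof (intro conjI ballI)
    fix v assume "v \<in> euclid n"
    show "g v \<in> euclid N" by (simp add: euclid_def g_def)
  next
    fix v1 v2 assume "v1 \<in> euclid n" "v2 \<in> euclid n"
    have en0: "enorm n (v1 - v2) \<ge> 0" by (simp add: enorm_def sum_nonneg)
    have "\<bar>(g v1 - g v2) j\<bar> \<le> L * B * enorm n (v1 - v2)" if "j < N" for j
    proof -
      have "\<bar>(g v1 - g v2) j\<bar> = L * \<bar>norm (u v1 - xn j) - norm (u v2 - xn j)\<bar>"
        using that L by (simp add: g_def abs_mult right_diff_distrib[symmetric] abs_minus_commute)
      also have "\<bar>norm (u v1 - xn j) - norm (u v2 - xn j)\<bar> \<le> norm ((u v1 - xn j) - (u v2 - xn j))"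
        by (rule norm_triangle_ineq3)
      also have "(u v1 - xn j) - (u v2 - xn j) = u v1 - u v2" by simp
      finally have "\<bar>(g v1 - g v2) j\<bar> \<le> L * norm (u v1 - u v2)" using L by simp
      also have "\<dots> \<le> L * (B * enorm n (v1 - v2))" using ulip L by (intro mult_left_mono) auto
      finally show ?thesis by (simp add: mult.assoc)
    qed
    then have "enorm N (g v1 - g v2) \<le> real N * (L * B * enorm n (v1 - v2))"
      using L B0 en0 by (intro enorm_le_bound) auto
    then show "enorm N (g v1 - g v2) \<le> W * enorm n (v1 - v2)" by (simp add: W_def mult.assoc)
  qed
  define cm where "cm x = (\<lambda>k. if k < n then schauder_coeff xb x k else 0)" for x
  define K' where "K' = cm ` K"
  have "continuous_on K cm"
    unfolding cm_def
  proof (intro continuous_on_coordinatewise_then_product)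
    fix k
    show "continuous_on K (\<lambda>x. if k < n then schauder_coeff xb x k else 0)"
    proof (cases "k < n")
      case True
      then show ?thesis using linear_continuous_on[OF coef_bl[OF hx, of k]] by simp
    qed simp
  qed
  then have cK': "compact K'" unfolding K'_def using cK by (rule compact_continuous_image)
  have K'e: "K' \<subseteq> euclid n" by (auto simp: K'_def cm_def euclid_def)
  have "\<exists>r. (\<forall>\<omega> K n m. r \<omega> K n m \<longlonglongrightarrow> 0) \<and> (\<forall>\<omega> n m f K c. modulus \<omega> \<longrightarrow> unif_cont_mod \<omega> n m f \<longrightarrow>
          compact K \<longrightarrow> K \<subseteq> euclid n \<longrightarrow>
          (\<exists>g\<in>F n m c. \<forall>v\<in>K. enorm m (f v - g v) \<le> r \<omega> K n m c))"
    using assms(6) unfolding universal_approximator_def by (elim conjE exE) blast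
  then obtain r where r_lim0: "\<forall>\<omega> K n m. r \<omega> K n m \<longlonglongrightarrow> 0"
    and r_app0: "\<forall>\<omega> n m f K c. modulus \<omega> \<longrightarrow> unif_cont_mod \<omega> n m f \<longrightarrow>
          compact K \<longrightarrow> K \<subseteq> euclid n \<longrightarrow>
          (\<exists>g\<in>F n m c. \<forall>v\<in>K. enorm m (f v - g v) \<le> r \<omega> K n m c)" by blast
  note r_lim = r_lim0[rule_format] and r_app = r_app0[rule_format]
  have "eventually (\<lambda>c. dist (r (\<lambda>t. W * t) K' n N c) 0 < 1/4) sequentially"
  proof -
    have "\<forall>e>0. eventually (\<lambda>c. dist (r (\<lambda>t. W * t) K' n N c) 0 < e) sequentially"
      using r_lim[of "\<lambda>t. W * t" K' n N] unfolding tendsto_iff by blast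
    then show ?thesis by (rule allE[of _ "1/4"]) simp
  qed
  then obtain N0 where N0: "\<forall>na\<ge>N0. dist (r (\<lambda>t. W * t) K' n N na) 0 < 1/4"
    unfolding eventually_sequentially by blast
  define c where "c = N0"
  have c: "r (\<lambda>t. W * t) K' n N c < 1/4"
    using N0[rule_format, of N0] unfolding c_def dist_real_def by linarith
  obtain fh where fh: "fh \<in> F n N c" "\<And>v. v \<in> K' \<Longrightarrow> enorm N (g v - fh v) \<le> r (\<lambda>t. W * t) K' n N c"
    using r_app[OF modulus_lin[OF W0] ucm cK' K'e, of c] by blast
  have fhg: "\<bar>g v j - fh v j\<bar> < 1/4" if "v \<in> K'" "j < N" for v j
    using enorm_coord[of j N "g v - fh v"] fh(2)[OF that(1)] c that(2) by simp
  have est: "norm ((\<Sum>j<N. \<Sum>i<q. (proj_simplex N (fh (cm x)) j * z j i) *\<^sub>R yb i) - f x) \<le> \<epsilon> / 2"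
    if x: "x \<in> K" for x
  proof -
    define v where "v = cm x"
    define w where "w = proj_simplex N (fh v)"
    have vK: "v \<in> K'" using x by (simp add: v_def K'_def)
    have uv: "u v = Sp xb n x" using hx by (simp add: u_def v_def cm_def Sp_def)
    have wprop: "w \<in> prob_simplex N" "\<And>j i. j < N \<Longrightarrow> w j \<noteq> 0 \<Longrightarrow> i < N \<Longrightarrow> fh v i - 1 \<le> fh v j"
      using proj_simplex_prop[OF N1, of "fh v"] unfolding w_def by blast+
    have w0: "\<And>j. j < N \<Longrightarrow> 0 \<le> w j" and sw: "(\<Sum>j<N. w j) = 1"
      using wprop(1) unfolding prob_simplex_def by auto
    obtain j0 where j0: "j0 < N" "dist (xn j0) x < \<rho> / 4" using near[OF x] by blast
    have good: "norm (Sp yb q (f (xn j)) - f x) < \<epsilon> / 2" if j: "j < N" "w j \<noteq> 0" for j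
    proof -
      have "fh v j0 - 1 \<le> fh v j" using wprop(2)[OF j j0(1)] .
      then have "g v j0 - 3/2 \<le> g v j" using fhg[OF vK j(1)] fhg[OF vK j0(1)] by linarith
      then have "- L * norm (u v - xn j0) - 3/2 \<le> - L * norm (u v - xn j)"
        using j(1) j0(1) by (simp add: g_def)
      then have "L * norm (u v - xn j) \<le> L * norm (u v - xn j0) + 3/2" by linarith
      then have "norm (u v - xn j) \<le> norm (u v - xn j0) + 3 / (2 * L)" using L
        by (simp add: field_simps)
      moreover have "3 / (2 * L) = \<rho> / 4" using rho by (simp add: L_def)
      moreover have "norm (u v - xn j0) < \<rho> / 2"
      proof -
        have "norm (u v - xn j0) \<le> norm (Sp xb n x - x) + norm (x - xn j0)"
          unfolding uv using norm_triangle_ineq[of "Sp xb n x - x" "x - xn j0"] by simp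
        moreover have "norm (Sp xb n x - x) < \<rho> / 4" using n(2)[OF x] by (simp add: norm_minus_commute)
        moreover have "norm (x - xn j0) < \<rho> / 4" using j0(2) by (simp add: dist_norm norm_minus_commute)
        ultimately show ?thesis by linarith
      qed
      ultimately have a: "norm (Sp xb n x - xn j) < 3 * \<rho> / 4" unfolding uv by linarith
      have "norm (x - xn j) \<le> norm (x - Sp xb n x) + norm (Sp xb n x - xn j)"
        using norm_triangle_ineq[of "x - Sp xb n x" "Sp xb n x - xn j"] by simp
      then have "norm (x - xn j) < \<rho>" using n(2)[OF x] a by linarith
      then have "norm (f x - f (xn j)) < \<epsilon> / 4" by (rule rho(2))
      moreover have "norm (Sp yb q (f (xn j)) - f (xn j)) < \<epsilon> / 4" using Yj[OF j(1)] .
      moreover have "norm (Sp yb q (f (xn j)) - f x) \<le> norm (Sp yb q (f (xn j)) - f (xn j)) + norm (f x - f (xn j))"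
        using norm_triangle_ineq4[of "Sp yb q (f (xn j)) - f (xn j)" "f x - f (xn j)"] by simp
      ultimately show ?thesis by linarith
    qed
    have sumeq: "(\<Sum>j<N. \<Sum>i<q. (w j * z j i) *\<^sub>R yb i) - f x = (\<Sum>j<N. w j *\<^sub>R (Sp yb q (f (xn j)) - f x))"
    proof -
      have "(\<Sum>j<N. \<Sum>i<q. (w j * z j i) *\<^sub>R yb i) = (\<Sum>j<N. w j *\<^sub>R Sp yb q (f (xn j)))"
        using hy by (simp add: Sp_def z_def scaleR_sum_right)
      moreover have "f x = (\<Sum>j<N. w j *\<^sub>R f x)" using sw by (simp add: scaleR_sum_left[symmetric])
      ultimately show ?thesis by (simp add: scaleR_diff_right sum_subtractf)
    qed
    have "norm (\<Sum>j<N. w j *\<^sub>R (Sp yb q (f (xn j)) - f x)) \<le> (\<Sum>j<N. norm (w j *\<^sub>R (Sp yb q (f (xn j)) - f x)))"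
      by (rule norm_sum)
    also have "\<dots> \<le> (\<Sum>j<N. w j * (\<epsilon> / 2))"
    proof (intro sum_mono)
      fix j assume "j \<in> {..<N}"
      then have j: "j < N" by simp
      show "norm (w j *\<^sub>R (Sp yb q (f (xn j)) - f x)) \<le> w j * (\<epsilon> / 2)"
      proof (cases "w j = 0")
        case False
        then have "norm (Sp yb q (f (xn j)) - f x) \<le> \<epsilon> / 2" using good[OF j] by simp
        then have "w j * norm (Sp yb q (f (xn j)) - f x) \<le> w j * (\<epsilon> / 2)"
          using w0[OF j] by (rule mult_left_mono)
        then show ?thesis using w0[OF j] by simp
      qed simp
    qed
    also have "\<dots> = (\<Sum>j<N. w j) * (\<epsilon> / 2)" by (rule sum_distrib_right[symmetric])
    also have "\<dots> = \<epsilon> / 2" using sw by simp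
    finally have fin: "norm (\<Sum>j<N. w j *\<^sub>R (Sp yb q (f (xn j)) - f x)) \<le> \<epsilon> / 2" .
    have "norm ((\<Sum>j<N. \<Sum>i<q. (w j * z j i) *\<^sub>R yb i) - f x) \<le> \<epsilon> / 2"
      unfolding sumeq by (rule fin)
    then show ?thesis by (simp only: w_def v_def)
  qed
  show ?thesis
  proof (rule exI[of _ n], rule exI[of _ N], rule exI[of _ q], rule exI[of _ fh], rule exI[of _ z], intro conjI)
    show "n \<ge> 1" by (rule n(1))
    show "N \<ge> 1" by (rule N1)
    show "q \<ge> 1" by (rule q1)
    show "fh \<in> (\<Union>c. F n N c)" using fh(1) by blast
    show "\<exists>\<delta><\<epsilon>. \<forall>x\<in>K. norm ((\<Sum>j<N. \<Sum>i<q.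
               (proj_simplex N (fh (\<lambda>k. if k < n then schauder_coeff xb x k else 0)) j
                 * z j i) *\<^sub>R yb i) - f x) \<le> \<delta>"
      using est eps unfolding cm_def by (intro exI[of _ "\<epsilon> / 2"]) auto
  qed
qed


end
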